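(* Let $\mathcal K=\{\mathbf x\in\mathbb R^n : \mathbf k_i^T\mathbf x\ge 0,\ i=1,\dots,p\}$ be a polyhedral cone with non-empty topological interior, where each $\mathbf k_i$ has unit Euclidean length, and let $z_\infty$ be the inradius of $\mathcal K$. Define linear programs as follows. Problem $P_0$: maximize $z$ over $(\mathbf x,z)\in\mathbb R^n\times\mathbb R$ subject to $\mathbf k_i^T\mathbf x\ge z$ for all $i$ and $-1\le x_i\le 1$ for all $i=1,\dots,n$. Given Problem $P_\ell$, let $(\mathbf x_\ell,z_\ell)$ be an (arbitrarily chosen) optimal solution of $P_\ell$, let $\mathbf u_\ell=\mathbf x_\ell/\|\mathbf x_\ell\|$, and let Problem $P_{\ell+1}$ be Problem $P_\ell$ with the additional constraint $\mathbf u_\ell^T\mathbf x\le 1$. Let $w_\ell=z_\ell/\|\mathbf x_\ell\|$. Then \[ z_0\ge z_1\ge\cdots\ge z_\ell\ge\cdots\ge z_\infty, \] and for any nonnegative integers $m$ and $n'$ we have $z_m\ge z_\infty\ge w_{n'}$.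
   Context: $B_r(\mathbf x)=\{\mathbf y\in\mathbb R^n:\|\mathbf x-\mathbf y\|\le r\}$ denotes the closed ball, with $\|\cdot\|$ the Euclidean norm. The insphere of a polyhedral cone $\mathcal K$ is the largest ball contained in $\mathcal K$ whose center lies in $B_1(\mathbf 0)$, and the inradius is its radius. (For each $\ell$, problem $P_\ell$ has an optimal solution and $\|\mathbf x_\ell\|\ge 1$, so $\mathbf u_\ell$ is well defined.) *)

theory Defs
  imports "HOL-Analysis.Analysis"
begin

definition poly_cone :: "(nat \<Rightarrow> real^'n) \<Rightarrow> nat \<Rightarrow> (real^'n) set" where
  "poly_cone k p = {x. \<forall>i\<in>{1..p}. 0 \<le> k i \<bullet> x}"

definition inradius :: "(real^'n) set \<Rightarrow> real" where
  "inradius K = (GREATEST r. 0 \<le> r \<and> (\<exists>c. norm c \<le> 1 \<and> cball c r \<subseteq> K))"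

text \<open>Feasible set of problem P_l, where u j (j < l) are the added cut directions.\<close>
definition LP_feasible ::
  "(nat \<Rightarrow> real^'n) \<Rightarrow> nat \<Rightarrow> (nat \<Rightarrow> real^'n) \<Rightarrow> nat \<Rightarrow> ((real^'n) \<times> real) set" where
  "LP_feasible k p u l = {xz. (\<forall>i\<in>{1..p}. snd xz \<le> k i \<bullet> fst xz)
      \<and> (\<forall>i. -1 \<le> fst xz $ i \<and> fst xz $ i \<le> 1)
      \<and> (\<forall>j<l. u j \<bullet> fst xz \<le> 1)}"

definition LP_optimal ::
  "(nat \<Rightarrow> real^'n) \<Rightarrow> nat \<Rightarrow> (nat \<Rightarrow> real^'n) \<Rightarrow> nat \<Rightarrow> real^'n \<Rightarrow> real \<Rightarrow> bool" where
  "LP_optimal k p u l x z \<longleftrightarrow> (x, z) \<in> LP_feasible k p u l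
      \<and> (\<forall>yw \<in> LP_feasible k p u l. snd yw \<le> z)"

end

theory Submission
  imports Defs
begin

lemma cball_sub_cone:
  fixes k :: "nat \<Rightarrow> real^'n"
  assumes unit: "\<forall>i\<in>{1..p}. norm (k i) = 1" and r: "0 \<le> r"
  shows "cball c r \<subseteq> poly_cone k p \<longleftrightarrow> (\<forall>i\<in>{1..p}. r \<le> k i \<bullet> c)"
proof
  assume H: "cball c r \<subseteq> poly_cone k p"
  show "\<forall>i\<in>{1..p}. r \<le> k i \<bullet> c"
  proof
    fix i assume i: "i \<in> {1..p}"
    have "c - r *\<^sub>R k i \<in> cball c r" using unit i r by (simp add: dist_norm)
    hence "0 \<le> k i \<bullet> (c - r *\<^sub>R k i)" using H i unfolding poly_cone_def by blast
    moreover have "k i \<bullet> k i = 1" using unit i by (simp add: dot_square_norm)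
    ultimately show "r \<le> k i \<bullet> c" by (simp add: inner_diff_right)
  qed
next
  assume H: "\<forall>i\<in>{1..p}. r \<le> k i \<bullet> c"
  show "cball c r \<subseteq> poly_cone k p"
  proof
    fix x assume x: "x \<in> cball c r"
    show "x \<in> poly_cone k p" unfolding poly_cone_def
    proof (intro CollectI ballI)
      fix i assume i: "i \<in> {1..p}"
      have "\<bar>k i \<bullet> (x - c)\<bar> \<le> norm (k i) * norm (x - c)" by (rule Cauchy_Schwarz_ineq2)
      also have "\<dots> \<le> r" using unit i x by (simp add: dist_norm norm_minus_commute)
      finally have "k i \<bullet> x - k i \<bullet> c \<ge> - r" by (simp add: inner_diff_right)
      moreover have "r \<le> k i \<bullet> c" using H i by blast
      ultimately show "0 \<le> k i \<bullet> x" by linarith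
    qed
  qed
qed

theorem proposition3:
  fixes k :: "nat \<Rightarrow> real^'n" and p :: nat
    and xs :: "nat \<Rightarrow> real^'n" and zs :: "nat \<Rightarrow> real"
  assumes unit: "\<forall>i\<in>{1..p}. norm (k i) = 1"
    and int_ne: "interior (poly_cone k p) \<noteq> {}"
    and opt: "\<forall>l. LP_optimal k p (\<lambda>j. xs j /\<^sub>R norm (xs j)) l (xs l) (zs l)"
  shows "(\<forall>l. zs (Suc l) \<le> zs l)
    \<and> (\<forall>l. inradius (poly_cone k p) \<le> zs l)
    \<and> (\<forall>m n'. inradius (poly_cone k p) \<le> zs m
              \<and> zs n' / norm (xs n') \<le> inradius (poly_cone k p))"
proof -
  define u where "u = (\<lambda>j. xs j /\<^sub>R norm (xs j))"
  have opt': "\<And>l. LP_optimal k p u l (xs l) (zs l)" using opt u_def by simp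
  have p1: "1 \<le> p"
  proof (rule ccontr)
    assume "\<not> 1 \<le> p"
    hence "(xs 0, zs 0 + 1) \<in> LP_feasible k p u 0" using opt'[of 0]
      by (auto simp: LP_optimal_def LP_feasible_def)
    thus False using opt'[of 0] unfolding LP_optimal_def by force
  qed
  define T where "T = (cball (0::real^'n) 1 \<times> {0..1}) \<inter>
      (\<Inter>i\<in>{1..p}. {y::(real^'n)\<times>real. snd y - k i \<bullet> fst y \<le> 0})"
  have "closed {y::(real^'n)\<times>real. snd y - k i \<bullet> fst y \<le> 0}" for i
    by (intro closed_Collect_le continuous_intros)
  hence cT: "closed T" unfolding T_def by (intro closed_Int closed_INT closed_Times) auto
  have "bounded T" unfolding T_def by (intro bounded_Int disjI1 bounded_Times) auto
  hence "compact T" using cT by (simp add: compact_eq_bounded_closed)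
  hence cS: "compact (snd ` T)" by (intro compact_continuous_image continuous_intros)
  have "(0, 0) \<in> T" unfolding T_def by auto
  hence "snd ` T \<noteq> {}" by blast
  then obtain r0 where r0T: "r0 \<in> snd ` T" and r0max: "\<forall>y\<in>snd ` T. y \<le> r0"
    using compact_attains_sup[OF cS] by blast
  then obtain c0 where c0T: "(c0, r0) \<in> T" by force
  have c0: "norm c0 \<le> 1" "0 \<le> r0" "\<forall>i\<in>{1..p}. r0 \<le> k i \<bullet> c0"
    using c0T unfolding T_def by auto
  have key: "r \<le> r0" if "norm c \<le> 1" "0 \<le> r" "\<forall>i\<in>{1..p}. r \<le> k i \<bullet> c" for c r
  proof -
    have "r \<le> k 1 \<bullet> c" using that p1 by auto
    also have "\<dots> \<le> norm (k 1) * norm c" by (rule norm_cauchy_schwarz)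
    also have "\<dots> \<le> 1" using unit p1 that by auto
    finally have "(c, r) \<in> T" using that unfolding T_def by auto
    thus ?thesis using r0max by force
  qed
  have inr: "inradius (poly_cone k p) = r0"
    unfolding inradius_def
  proof (rule Greatest_equality)
    show "0 \<le> r0 \<and> (\<exists>c. norm c \<le> 1 \<and> cball c r0 \<subseteq> poly_cone k p)"
      using c0 cball_sub_cone[OF unit] by blast
    fix y assume "0 \<le> y \<and> (\<exists>c. norm c \<le> 1 \<and> cball c y \<subseteq> poly_cone k p)"
    then obtain c where "0 \<le> y" "norm c \<le> 1" "cball c y \<subseteq> poly_cone k p" by blast
    thus "y \<le> r0" using key cball_sub_cone[OF unit] by blast
  qed
  have A: "zs (Suc l) \<le> zs l" for l
  proof -
    have "(xs (Suc l), zs (Suc l)) \<in> LP_feasible k p u l"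
      using opt'[of "Suc l"] unfolding LP_optimal_def LP_feasible_def by auto
    thus ?thesis using opt'[of l] unfolding LP_optimal_def by force
  qed
  have normu: "norm (u j) \<le> 1" for j
    unfolding u_def by (cases "xs j = 0") auto
  have B: "r0 \<le> zs l" for l
  proof -
    have "\<bar>c0 $ i\<bar> \<le> 1" for i using component_le_norm_cart[of c0 i] c0 by linarith
    moreover have "u j \<bullet> c0 \<le> 1" for j
    proof -
      have "u j \<bullet> c0 \<le> norm (u j) * norm c0" by (rule norm_cauchy_schwarz)
      also have "\<dots> \<le> 1" using normu[of j] c0 by (simp add: mult_le_one)
      finally show ?thesis .
    qed
    ultimately have "(c0, r0) \<in> LP_feasible k p u l"
      using c0 unfolding LP_feasible_def by (auto simp: abs_le_iff)
    thus ?thesis using opt'[of l] unfolding LP_optimal_def by force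
  qed
  have C: "zs n / norm (xs n) \<le> r0" for n
  proof (cases "xs n = 0 \<or> zs n / norm (xs n) < 0")
    case True thus ?thesis using c0 by auto
  next
    case False
    hence nz: "norm (xs n) > 0" and r: "0 \<le> zs n / norm (xs n)" by auto
    have feas: "\<forall>i\<in>{1..p}. zs n \<le> k i \<bullet> xs n"
      using opt'[of n] unfolding LP_optimal_def LP_feasible_def by auto
    show ?thesis
    proof (rule key[of "u n"])
      show "norm (u n) \<le> 1" by (rule normu)
      show "0 \<le> zs n / norm (xs n)" by (rule r)
      show "\<forall>i\<in>{1..p}. zs n / norm (xs n) \<le> k i \<bullet> u n"
      proof
        fix i assume "i \<in> {1..p}"
        hence "zs n \<le> k i \<bullet> xs n" using feas by blast
        hence "zs n / norm (xs n) \<le> (k i \<bullet> xs n) / norm (xs n)"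
          using nz by (simp add: divide_right_mono)
        thus "zs n / norm (xs n) \<le> k i \<bullet> u n" unfolding u_def by (simp add: divide_inverse mult.commute)
      qed
    qed
  qed
  show ?thesis using A B C inr by auto
qed

end
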